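(* Let $\alpha$ be an action of a group $\Gamma$ by homeomorphisms on an infinite Hausdorff topological space $X$. Then $\alpha$ is highly topologically transitive if and only if one of the following holds: (i) $X$ is perfect (has no isolated points) and for every $d\ge1$ the diagonal action $\alpha^d$ on $X^d$ (product topology) is topologically transitive; or (ii) the set of isolated points of $X$ is dense in $X$, and the restriction of $\alpha$ to this set is highly transitive (in particular this set is a single orbit).
   Context: For an action by homeomorphisms on a Hausdorff space $X$: it is topologically transitive if for all nonempty open $U,V\subseteq X$ there is $\gamma$ with $U\alpha(\gamma)\cap V\neq\emptyset$; for $d\ge1$ it is $d$-topologically transitive if the diagonal action on $X^{(d)}=\{(x_1,\dots,x_d)\in X^d:x_i\neq x_j\text{ for } i\ne j\}$ (topology induced from $X^d$) is topologically transitive; for infinite $X$ it is highly topologically transitive if it is $d$-topologically transitive for every $d\ge1$. An action on an infinite set is highly transitive if for every $d$, all pairwise distinct $x_1,\dots,x_d$ and all pairwise distinct $y_1,\dots,y_d$, some group element maps $x_i$ to $y_i$ for all $i$. *)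

theory Defs
  imports "HOL-Analysis.Analysis" "HOL-Algebra.Group_Action"
begin

definition action_by_homeos :: "('g, 'm) monoid_scheme \<Rightarrow> 'a topology \<Rightarrow> ('g \<Rightarrow> 'a \<Rightarrow> 'a) \<Rightarrow> bool" where
  "action_by_homeos G X \<phi> \<longleftrightarrow> group_action G (topspace X) \<phi> \<and>
     (\<forall>g\<in>carrier G. homeomorphic_map X X (\<phi> g))"

definition top_transitive :: "'b topology \<Rightarrow> 'g set \<Rightarrow> ('g \<Rightarrow> 'b \<Rightarrow> 'b) \<Rightarrow> bool" where
  "top_transitive T A act \<longleftrightarrow>
     (\<forall>U V. openin T U \<and> U \<noteq> {} \<and> openin T V \<and> V \<noteq> {} \<longrightarrow>
        (\<exists>g\<in>A. act g ` U \<inter> V \<noteq> {}))"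

text \<open>X^d: d-tuples are (extensional) functions on {..<d}, product topology.\<close>
definition power_top :: "'a topology \<Rightarrow> nat \<Rightarrow> (nat \<Rightarrow> 'a) topology" where
  "power_top X d = product_topology (\<lambda>_. X) {..<d}"

text \<open>X^(d): tuples with pairwise distinct entries, subspace topology.\<close>
definition config_top :: "'a topology \<Rightarrow> nat \<Rightarrow> (nat \<Rightarrow> 'a) topology" where
  "config_top X d = subtopology (power_top X d) {f. inj_on f {..<d}}"

definition diag_act :: "('g \<Rightarrow> 'a \<Rightarrow> 'a) \<Rightarrow> nat \<Rightarrow> 'g \<Rightarrow> (nat \<Rightarrow> 'a) \<Rightarrow> (nat \<Rightarrow> 'a)" where
  "diag_act \<phi> d g f = restrict (\<lambda>i. \<phi> g (f i)) {..<d}"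

definition d_top_transitive :: "('g, 'm) monoid_scheme \<Rightarrow> 'a topology \<Rightarrow> ('g \<Rightarrow> 'a \<Rightarrow> 'a) \<Rightarrow> nat \<Rightarrow> bool" where
  "d_top_transitive G X \<phi> d \<longleftrightarrow> top_transitive (config_top X d) (carrier G) (diag_act \<phi> d)"

definition highly_top_transitive :: "('g, 'm) monoid_scheme \<Rightarrow> 'a topology \<Rightarrow> ('g \<Rightarrow> 'a \<Rightarrow> 'a) \<Rightarrow> bool" where
  "highly_top_transitive G X \<phi> \<longleftrightarrow> (\<forall>d\<ge>1. d_top_transitive G X \<phi> d)"

definition isolated_points :: "'a topology \<Rightarrow> 'a set" where
  "isolated_points X = {x \<in> topspace X. openin X {x}}"

definition perfect_top :: "'a topology \<Rightarrow> bool" where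
  "perfect_top X \<longleftrightarrow> isolated_points X = {}"

definition highly_transitive_on :: "('g, 'm) monoid_scheme \<Rightarrow> 'a set \<Rightarrow> ('g \<Rightarrow> 'a \<Rightarrow> 'a) \<Rightarrow> bool" where
  "highly_transitive_on G Y \<phi> \<longleftrightarrow> infinite Y \<and>
     (\<forall>d. \<forall>x y :: nat \<Rightarrow> 'a. (\<forall>i<d. x i \<in> Y \<and> y i \<in> Y) \<and> inj_on x {..<d} \<and> inj_on y {..<d}
        \<longrightarrow> (\<exists>g\<in>carrier G. \<forall>i<d. \<phi> g (x i) = y i))"

end

theory Submission
  imports Defs
begin

lemma topspace_power: "topspace (power_top X d) = PiE {..<d} (\<lambda>_. topspace X)"
  by (simp add: power_top_def)

lemma open_inj:
  assumes "Hausdorff_space X"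
  shows "openin (power_top X d) (topspace (power_top X d) \<inter> {f. inj_on f {..<d}})"
proof -
  let ?T = "topspace (power_top X d)"
  let ?C = "\<Union>i<d. \<Union>j\<in>{..<d}-{i}. {f \<in> ?T. f i = f j}"
  have eq: "?T \<inter> {f. inj_on f {..<d}} = ?T - ?C"
    by (auto simp: inj_on_def)
  have "closedin (power_top X d) {f \<in> ?T. f i = f j}" if "i < d" "j < d" for i j
    unfolding power_top_def
    by (rule closedin_continuous_maps_eq[OF assms]) (auto intro: continuous_map_product_projection that)
  then have "closedin (power_top X d) ?C"
    by (intro closedin_Union) (auto intro!: closedin_Union)
  then show ?thesis unfolding eq by (intro openin_diff) auto
qed

lemma open_config_imp:
  assumes "Hausdorff_space X" "openin (config_top X d) U"
  shows "openin (power_top X d) U \<and> U \<subseteq> {f. inj_on f {..<d}}"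
proof -
  have "config_top X d = subtopology (power_top X d) (topspace (power_top X d) \<inter> {f. inj_on f {..<d}})"
    unfolding config_top_def by (metis subtopology_restrict)
  with assms open_inj[OF assms(1), of d] show ?thesis
    by (simp add: openin_open_subtopology)
qed

lemma open_config_intro:
  assumes "openin (power_top X d) U" "U \<subseteq> {f. inj_on f {..<d}}"
  shows "openin (config_top X d) U"
  unfolding config_top_def openin_subtopology using assms by blast

lemma open_box_in:
  assumes "openin (power_top X d) U" "u \<in> U"
  obtains W where "\<And>i. i < d \<Longrightarrow> openin X (W i) \<and> u i \<in> W i" "PiE {..<d} W \<subseteq> U"
proof -
  from assms obtain W where W: "(\<forall>i \<in> {..<d}. openin X (W i))" "u \<in> PiE {..<d} W" "PiE {..<d} W \<subseteq> U"
    unfolding power_top_def openin_product_topology_alt by blast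
  show ?thesis by (rule that[of W]) (use W in \<open>auto simp: PiE_iff\<close>)
qed

lemma open_box:
  assumes "\<And>i. i < d \<Longrightarrow> openin X (W i)"
  shows "openin (power_top X d) (PiE {..<d} W)"
  unfolding power_top_def openin_PiE_gen using assms by auto

lemma choose_distinct:
  fixes d :: nat and W :: "nat \<Rightarrow> 'a set"
  shows "(\<forall>i<d. infinite (W i)) \<Longrightarrow> \<exists>x. inj_on x {..<d} \<and> (\<forall>i<d. x i \<in> W i)"
proof (induction d)
  case 0
  then show ?case by simp
next
  case (Suc d)
  then obtain x where x: "inj_on x {..<d}" "\<forall>i<d. x i \<in> W i" by auto
  have "infinite (W d)" using Suc.prems by simp
  then have "infinite (W d - x ` {..<d})" by (intro Diff_infinite_finite) simp_all
  then have "W d - x ` {..<d} \<noteq> {}" by (metis finite.emptyI)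
  then obtain y where y: "y \<in> W d" "y \<notin> x ` {..<d}" by blast
  define x' where "x' = x(d := y)"
  have agree: "\<And>i. i \<in> {..<d} \<Longrightarrow> x' i = x i" unfolding x'_def by simp
  have i1: "inj_on x' {..<d}" using inj_on_cong[of "{..<d}" x' x, OF agree] x(1) by (rule iffD2)
  have im: "x' ` {..<d} = x ` {..<d}" using agree by (rule image_cong[OF refl])
  have "x' d = y" unfolding x'_def by simp
  then have "x' d \<notin> x' ` ({..<d} - {d})" using y(2) im by simp
  then have "inj_on x' (insert d {..<d})" using i1 by (simp add: inj_on_insert)
  then have "inj_on x' {..<Suc d}" by (simp add: lessThan_Suc)
  moreover have "\<forall>i<Suc d. x' i \<in> W i"
  proof (intro allI impI)
    fix i assume "i < Suc d"
    then consider "i < d" | "i = d" by linarith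
    then show "x' i \<in> W i"
    proof cases
      case 1 then show ?thesis using agree x(2) by simp
    next
      case 2 then show ?thesis using \<open>x' d = y\<close> y(1) by simp
    qed
  qed
  ultimately show ?case by blast
qed

lemma perfect_open_infinite:
  assumes "Hausdorff_space X" "perfect_top X" "openin X W" "W \<noteq> {}"
  shows "infinite W"
proof
  assume fin: "finite W"
  obtain w where w: "w \<in> W" using assms(4) by auto
  have "closedin X (W - {w})"
    using Hausdorff_imp_t1_space[OF assms(1)] fin openin_subset[OF assms(3)]
    unfolding t1_space_closedin_finite by auto
  then have "openin X (W - (W - {w}))" using assms(3) by (intro openin_diff)
  moreover have "W - (W - {w}) = {w}" using w by auto
  ultimately have "w \<in> isolated_points X"
    unfolding isolated_points_def using w openin_subset[OF assms(3)] by auto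
  then show False using assms(2) unfolding perfect_top_def by auto
qed

lemma homeo_isolated:
  assumes "homeomorphic_map X X f" "x \<in> isolated_points X"
  shows "f x \<in> isolated_points X"
proof -
  have "openin X (f ` {x})"
    using assms homeomorphic_imp_open_map unfolding isolated_points_def open_map_def by blast
  moreover have "f x \<in> topspace X"
    using homeomorphic_imp_continuous_map[OF assms(1)] assms(2)
    unfolding isolated_points_def continuous_map_def by auto
  ultimately show ?thesis unfolding isolated_points_def by auto
qed

lemma singleton_box_open:
  assumes "\<And>i. i < d \<Longrightarrow> x i \<in> isolated_points X"
  shows "openin (power_top X d) (PiE {..<d} (\<lambda>i. {x i}))"
  using assms by (intro open_box) (auto simp: isolated_points_def)

lemma restrict_in_PiE_single: "restrict x {..<d} \<in> PiE {..<d} (\<lambda>i. {x i})"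
  by auto

lemma PiE_single_eq: "f \<in> PiE {..<d} (\<lambda>i. {x i}) \<Longrightarrow> i < (d::nat) \<Longrightarrow> f i = x i"
  by (auto simp: PiE_iff)

lemma PiE_single_inj:
  assumes "inj_on x {..<d}"
  shows "PiE {..<d} (\<lambda>i. {x i}) \<subseteq> {f. inj_on f {..<(d::nat)}}"
proof
  fix f assume "f \<in> PiE {..<d} (\<lambda>i. {x i})"
  then have "\<And>i. i \<in> {..<d} \<Longrightarrow> f i = x i" by (auto simp: PiE_iff)
  then have "inj_on f {..<d}" using inj_on_cong[of "{..<d}" f x] assms by blast
  then show "f \<in> {f. inj_on f {..<d}}" by simp
qed

lemma perfect_inj_point:
  assumes "Hausdorff_space X" "perfect_top X" "openin (power_top X d) U" "U \<noteq> {}"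
  shows "\<exists>f\<in>U. inj_on f {..<d}"
proof -
  obtain u where u: "u \<in> U" using assms(4) by auto
  obtain W where W: "\<And>i. i < d \<Longrightarrow> openin X (W i) \<and> u i \<in> W i" "PiE {..<d} W \<subseteq> U"
    using open_box_in[OF assms(3) u] by metis
  have "\<forall>i<d. infinite (W i)"
    using W(1) perfect_open_infinite[OF assms(1,2)] by blast
  then obtain x where x: "inj_on x {..<d}" "\<forall>i<d. x i \<in> W i" using choose_distinct by blast
  have "restrict x {..<d} \<in> U" using x(2) by (intro subsetD[OF W(2)]) (simp add: restrict_PiE_iff)
  moreover have "inj_on (restrict x {..<d}) {..<d}" using x(1) by (simp add: inj_on_def)
  ultimately show ?thesis by blast
qed

lemma iso_tuple:
  assumes "X closure_of (isolated_points X) = topspace X" "openin (power_top X d) U" "U \<noteq> {}"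
    "U \<subseteq> {f. inj_on f {..<d}}"
  shows "\<exists>x. (\<forall>i<d. x i \<in> isolated_points X) \<and> inj_on x {..<d} \<and> restrict x {..<d} \<in> U"
proof -
  obtain u where u: "u \<in> U" using assms(3) by auto
  obtain W where W: "\<And>i. i < d \<Longrightarrow> openin X (W i) \<and> u i \<in> W i" "PiE {..<d} W \<subseteq> U"
    using open_box_in[OF assms(2) u] by metis
  have "\<forall>i<d. \<exists>z. z \<in> isolated_points X \<and> z \<in> W i"
  proof (intro allI impI)
    fix i assume i: "i < d"
    then have "u i \<in> topspace X" using W(1) openin_subset by blast
    then have "u i \<in> X closure_of (isolated_points X)" using assms(1) by simp
    then show "\<exists>z. z \<in> isolated_points X \<and> z \<in> W i"
      unfolding in_closure_of using W(1)[OF i] by blast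
  qed
  then obtain x where x: "\<forall>i<d. x i \<in> isolated_points X \<and> x i \<in> W i" by metis
  have r: "restrict x {..<d} \<in> U" using x by (intro subsetD[OF W(2)]) (simp add: restrict_PiE_iff)
  then have "inj_on (restrict x {..<d}) {..<d}" using assms(4) by auto
  then have "inj_on x {..<d}" by (simp add: inj_on_def)
  then show ?thesis using x r by blast
qed

lemma img_int_ne: "h ` A \<inter> B \<noteq> {} \<Longrightarrow> \<exists>a\<in>A. h a \<in> B"
  by blast

lemma img_mono_ne: "h ` A \<inter> B \<noteq> {} \<Longrightarrow> A \<subseteq> A' \<Longrightarrow> B \<subseteq> B' \<Longrightarrow> h ` A' \<inter> B' \<noteq> {}"
  by blast

lemma ne_of_mem: "a \<in> A \<Longrightarrow> A \<noteq> {}"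
  by auto

lemma diag_restrict:
  assumes "\<forall>i<d. \<phi> g (x i) = y i"
  shows "diag_act \<phi> d g (restrict x {..<d}) = restrict y {..<d}"
  using assms by (auto simp: diag_act_def restrict_def)

theorem mainTheorem5:
  fixes G :: "('g, 'm) monoid_scheme" and X :: "'a topology" and \<phi> :: "'g \<Rightarrow> 'a \<Rightarrow> 'a"
  assumes "action_by_homeos G X \<phi>"
    and "Hausdorff_space X"
    and "infinite (topspace X)"
  shows "highly_top_transitive G X \<phi> \<longleftrightarrow>
    ((perfect_top X \<and> (\<forall>d\<ge>1. top_transitive (power_top X d) (carrier G) (diag_act \<phi> d)))
     \<or> (X closure_of (isolated_points X) = topspace X \<and>
        highly_transitive_on G (isolated_points X) \<phi>))"
proof
  have homeo: "\<And>g. g \<in> carrier G \<Longrightarrow> homeomorphic_map X X (\<phi> g)"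
    using assms(1) unfolding action_by_homeos_def by blast
  have grp: "group G"
    using assms(1) unfolding action_by_homeos_def group_action_def group_hom_def by blast
  let ?I = "isolated_points X"
  assume H: "highly_top_transitive G X \<phi>"
  have Ht: "\<And>d U V. d \<ge> 1 \<Longrightarrow> openin (config_top X d) U \<Longrightarrow> U \<noteq> {} \<Longrightarrow>
      openin (config_top X d) V \<Longrightarrow> V \<noteq> {} \<Longrightarrow> \<exists>g\<in>carrier G. diag_act \<phi> d g ` U \<inter> V \<noteq> {}"
    using H unfolding highly_top_transitive_def d_top_transitive_def top_transitive_def by blast
  show "((perfect_top X \<and> (\<forall>d\<ge>1. top_transitive (power_top X d) (carrier G) (diag_act \<phi> d)))
     \<or> (X closure_of ?I = topspace X \<and> highly_transitive_on G ?I \<phi>))"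
  proof (cases "perfect_top X")
    case True
    have "top_transitive (power_top X d) (carrier G) (diag_act \<phi> d)" if d: "d \<ge> 1" for d
      unfolding top_transitive_def
    proof (intro allI impI)
      fix U V assume UV: "openin (power_top X d) U \<and> U \<noteq> {} \<and> openin (power_top X d) V \<and> V \<noteq> {}"
      let ?S = "topspace (power_top X d) \<inter> {f. inj_on f {..<d}}"
      have oS: "openin (power_top X d) ?S" by (rule open_inj[OF assms(2)])
      have c: "openin (config_top X d) (U \<inter> ?S)" "openin (config_top X d) (V \<inter> ?S)"
        using UV oS by (auto intro!: open_config_intro)
      obtain f1 where f1: "f1 \<in> U" "inj_on f1 {..<d}" using perfect_inj_point[OF assms(2) True] UV by blast
      have "f1 \<in> topspace (power_top X d)" using openin_subset UV f1(1) by blast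
      then have n1: "U \<inter> ?S \<noteq> {}" using f1 by (intro ne_of_mem[of f1]) simp
      obtain f2 where f2: "f2 \<in> V" "inj_on f2 {..<d}" using perfect_inj_point[OF assms(2) True] UV by blast
      have "f2 \<in> topspace (power_top X d)" using openin_subset UV f2(1) by blast
      then have n2: "V \<inter> ?S \<noteq> {}" using f2 by (intro ne_of_mem[of f2]) simp
      obtain g where g: "g \<in> carrier G" "diag_act \<phi> d g ` (U \<inter> ?S) \<inter> (V \<inter> ?S) \<noteq> {}"
        using Ht[OF d c(1) n1 c(2) n2] by (rule bexE)
      have "diag_act \<phi> d g ` U \<inter> V \<noteq> {}" by (rule img_mono_ne[OF g(2)]) auto
      then show "\<exists>g\<in>carrier G. diag_act \<phi> d g ` U \<inter> V \<noteq> {}" using g(1) by (rule bexI)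
    qed
    with True show ?thesis by blast
  next
    case False
    then obtain x0 where x0: "x0 \<in> ?I" unfolding perfect_top_def by blast
    have dense: "X closure_of ?I = topspace X"
    proof
      show "X closure_of ?I \<subseteq> topspace X" by (rule closure_of_subset_topspace)
      show "topspace X \<subseteq> X closure_of ?I"
      proof
        fix x assume x: "x \<in> topspace X"
        show "x \<in> X closure_of ?I"
          unfolding in_closure_of
        proof (intro conjI allI impI x)
          fix T assume T: "x \<in> T \<and> openin X T"
          let ?U = "PiE {..<1::nat} (\<lambda>i. {x0})" and ?V = "PiE {..<1::nat} (\<lambda>i. T)"
          have inj1: "\<And>f. inj_on f {..<1::nat}" by (auto simp: inj_on_def)
          have "openin (power_top X 1) ?U" using x0 by (intro open_box) (auto simp: isolated_points_def)
          then have c1: "openin (config_top X 1) ?U" by (rule open_config_intro) (use inj1 in blast)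
          have "openin (power_top X 1) ?V" using T by (intro open_box) auto
          then have c2: "openin (config_top X 1) ?V" by (rule open_config_intro) (use inj1 in blast)
          have "restrict (\<lambda>i. x0) {..<1} \<in> ?U" "restrict (\<lambda>i. x) {..<1} \<in> ?V"
            using T by auto
          then have ne: "?U \<noteq> {}" "?V \<noteq> {}" by (metis equals0D)+
          have "\<exists>g\<in>carrier G. diag_act \<phi> 1 g ` ?U \<inter> ?V \<noteq> {}"
            using Ht[OF _ c1 ne(1) c2 ne(2)] by simp
          then obtain g where g: "g \<in> carrier G" "diag_act \<phi> 1 g ` ?U \<inter> ?V \<noteq> {}" by (rule bexE)
          obtain f where f: "f \<in> ?U" "diag_act \<phi> 1 g f \<in> ?V"
            using img_int_ne[OF g(2)] by (rule bexE)
          have "f 0 = x0" using f(1) by (auto simp: PiE_iff)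
          then have "\<phi> g x0 \<in> T" using f(2) by (auto simp: PiE_iff diag_act_def)
          moreover have "\<phi> g x0 \<in> ?I" using homeo_isolated[OF homeo[OF g(1)] x0] .
          ultimately show "\<exists>y. y \<in> ?I \<and> y \<in> T" by blast
        qed
      qed
    qed
    have infI: "infinite ?I"
    proof
      assume "finite ?I"
      then have "closedin X ?I"
        using Hausdorff_imp_t1_space[OF assms(2)] unfolding t1_space_closedin_finite
        by (auto simp: isolated_points_def)
      then have "?I = topspace X" using dense closure_of_closedin by metis
      then show False using assms(3) \<open>finite ?I\<close> by simp
    qed
    have "\<exists>g\<in>carrier G. \<forall>i<d. \<phi> g (x i) = y i"
      if xy: "(\<forall>i<d. x i \<in> ?I \<and> y i \<in> ?I) \<and> inj_on x {..<d} \<and> inj_on y {..<d}" for d :: nat and x y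
    proof (cases "d = 0")
      case True
      then show ?thesis using monoid.one_closed[OF group.is_monoid[OF grp]] by blast
    next
      case False
      let ?U = "PiE {..<d} (\<lambda>i. {x i})" and ?V = "PiE {..<d} (\<lambda>i. {y i})"
      have c: "openin (config_top X d) ?U" "openin (config_top X d) ?V"
        using xy by (auto intro!: open_config_intro singleton_box_open PiE_single_inj)
      have n1: "?U \<noteq> {}" using restrict_in_PiE_single[of x d] by (metis equals0D)
      have n2: "?V \<noteq> {}" using restrict_in_PiE_single[of y d] by (metis equals0D)
      have "1 \<le> d" using False by simp
      then have "\<exists>g\<in>carrier G. diag_act \<phi> d g ` ?U \<inter> ?V \<noteq> {}"
        using Ht[OF _ c(1) n1 c(2) n2] by simp
      then obtain g where g: "g \<in> carrier G" "diag_act \<phi> d g ` ?U \<inter> ?V \<noteq> {}" by (rule bexE)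
      obtain f where f: "f \<in> ?U" "diag_act \<phi> d g f \<in> ?V"
            using img_int_ne[OF g(2)] by (rule bexE)
      have "\<forall>i<d. \<phi> g (x i) = y i"
      proof (intro allI impI)
        fix i assume i: "i < d"
        have "\<phi> g (x i) = diag_act \<phi> d g f i"
          using PiE_single_eq[OF f(1) i] i by (simp add: diag_act_def)
        also have "\<dots> = y i" using PiE_single_eq[OF f(2) i] .
        finally show "\<phi> g (x i) = y i" .
      qed
      then show ?thesis using g(1) by blast
    qed
    then have "highly_transitive_on G ?I \<phi>"
      unfolding highly_transitive_on_def using infI by blast
    then show ?thesis using dense by blast
  qed
next
  let ?I = "isolated_points X"
  assume C: "((perfect_top X \<and> (\<forall>d\<ge>1. top_transitive (power_top X d) (carrier G) (diag_act \<phi> d)))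
     \<or> (X closure_of ?I = topspace X \<and> highly_transitive_on G ?I \<phi>))"
  show "highly_top_transitive G X \<phi>"
    unfolding highly_top_transitive_def d_top_transitive_def top_transitive_def
  proof (intro allI impI)
    fix d U V assume d: "1 \<le> d" and UV: "openin (config_top X d) U \<and> U \<noteq> {} \<and> openin (config_top X d) V \<and> V \<noteq> {}"
    have oU: "openin (power_top X d) U \<and> U \<subseteq> {f. inj_on f {..<d}}"
      using open_config_imp[OF assms(2)] UV by blast
    have oV: "openin (power_top X d) V \<and> V \<subseteq> {f. inj_on f {..<d}}"
      using open_config_imp[OF assms(2)] UV by blast
    show "\<exists>g\<in>carrier G. diag_act \<phi> d g ` U \<inter> V \<noteq> {}"
      using C
    proof
      assume "perfect_top X \<and> (\<forall>d\<ge>1. top_transitive (power_top X d) (carrier G) (diag_act \<phi> d))"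
      then have tt: "top_transitive (power_top X d) (carrier G) (diag_act \<phi> d)" using d by blast
      show ?thesis using tt[unfolded top_transitive_def, rule_format, of U V] UV oU oV by simp
    next
      assume ii: "X closure_of ?I = topspace X \<and> highly_transitive_on G ?I \<phi>"
      obtain x where x: "\<forall>i<d. x i \<in> ?I" "inj_on x {..<d}" "restrict x {..<d} \<in> U"
        using iso_tuple[of X d U] ii oU UV by blast
      obtain y where y: "\<forall>i<d. y i \<in> ?I" "inj_on y {..<d}" "restrict y {..<d} \<in> V"
        using iso_tuple[of X d V] ii oV UV by blast
      obtain g where g: "g \<in> carrier G" "\<forall>i<d. \<phi> g (x i) = y i"
        using ii x y unfolding highly_transitive_on_def by blast
      have "diag_act \<phi> d g (restrict x {..<d}) = restrict y {..<d}" using diag_restrict g(2) .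
      then have m: "restrict y {..<d} \<in> diag_act \<phi> d g ` U \<inter> V"
        using imageI[OF x(3), of "diag_act \<phi> d g"] y(3) by simp
      show ?thesis
      proof (rule bexI[OF _ g(1)])
        show "diag_act \<phi> d g ` U \<inter> V \<noteq> {}" using m by (metis equals0D)
      qed
    qed
  qed
qed

end
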